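(* Let $k\in\mathbb{R}_{\ge0}$, let $(A,B,C)\in\mathbb{R}_+^3$ be a $k$-initial triple and $(a,b,c)\in\mathbb{R}_+^3$ a $0$-initial triple. Let $\mathbf{w}=[w_1,w_2,\dots]$ be an infinite reduced sequence, and for $n\ge1$ put $(X_n,Y_n,Z_n)=\mathcal{M}_k^{\mathbf{w}_n}(A,B,C)$ and $(x_n,y_n,z_n)=\mathcal{M}^{\mathbf{w}_n}(a,b,c)$. (1) If each of $1,2,3$ appears infinitely many times in $\mathbf{w}$, then there is a real number $q$ such that $\lim_{n\to\infty}X_n/x_n=\lim_{n\to\infty}Y_n/y_n=\lim_{n\to\infty}Z_n/z_n=q$. (2) If some index $i\in\{1,2,3\}$ appears only finitely many times in $\mathbf{w}$, then there is a real number $q$ such that for both indices $j\in\{1,2,3\}\setminus\{i\}$, the ratio of the $j$-th component of $(X_n,Y_n,Z_n)$ to the $j$-th component of $(x_n,y_n,z_n)$ converges to $q$ as $n\to\infty$.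
   Context: For $k\in\mathbb{R}_{\ge0}$ define maps on $\mathbb{R}_+^3$: $\mathcal{M}_{1;k}(X,Y,Z)=(k+Y+Z,Y,Z)$, $\mathcal{M}_{2;k}(X,Y,Z)=(X,k+X+Z,Z)$, $\mathcal{M}_{3;k}(X,Y,Z)=(X,Y,k+X+Y)$, and $\mathcal{M}_i=\mathcal{M}_{i;0}$. A $k$-initial triple is $(A,B,C)\in\mathbb{R}_+^3$ with $A\neq B+C+k$, $B\neq A+C+k$, $C\neq A+B+k$. A sequence $\mathbf{w}=[w_1,w_2,\dots]$ with $w_i\in\{1,2,3\}$ is reduced if $w_i\neq w_{i+1}$ for all $i$; $\mathbf{w}_n=[w_1,\dots,w_n]$, and $\mathcal{M}_k^{\mathbf{w}_n}=\mathcal{M}_{w_n;k}\circ\cdots\circ\mathcal{M}_{w_1;k}$, $\mathcal{M}^{\mathbf{w}_n}=\mathcal{M}_{w_n}\circ\cdots\circ\mathcal{M}_{w_1}$. (The triples $\mathcal{M}_k^{\mathbf{w}}(A,B,C)$ form the $k$-generalized Euclid tree; for $k=0$ the classical Euclid tree.) *)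

theory Defs
  imports Complex_Main
begin

type_synonym triple = "real \<times> real \<times> real"

fun Mk :: "real \<Rightarrow> nat \<Rightarrow> triple \<Rightarrow> triple" where
  "Mk k i (X, Y, Z) =
     (if i = 1 then (k + Y + Z, Y, Z)
      else if i = 2 then (X, k + X + Z, Z)
      else if i = 3 then (X, Y, k + X + Y)
      else (X, Y, Z))"

fun comp :: "nat \<Rightarrow> triple \<Rightarrow> real" where
  "comp j (X, Y, Z) = (if j = 1 then X else if j = 2 then Y else Z)"

definition pos_triple :: "triple \<Rightarrow> bool" where
  "pos_triple t \<longleftrightarrow> comp 1 t > 0 \<and> comp 2 t > 0 \<and> comp 3 t > 0"

definition k_initial :: "real \<Rightarrow> triple \<Rightarrow> bool" where
  "k_initial k t \<longleftrightarrow> pos_triple t \<and>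
     (case t of (A, B, C) \<Rightarrow> A \<noteq> B + C + k \<and> B \<noteq> A + C + k \<and> C \<noteq> A + B + k)"

text \<open>An infinite sequence w = [w_1, w_2, ...] is encoded as w :: nat => nat with
  w 0 = w_1, w 1 = w_2, ...\<close>
definition reduced_seq :: "(nat \<Rightarrow> nat) \<Rightarrow> bool" where
  "reduced_seq w \<longleftrightarrow> (\<forall>n. w n \<in> {1,2,3}) \<and> (\<forall>n. w n \<noteq> w (Suc n))"

fun iterM :: "real \<Rightarrow> (nat \<Rightarrow> nat) \<Rightarrow> nat \<Rightarrow> triple \<Rightarrow> triple" where
  "iterM k w 0 t = t"
| "iterM k w (Suc n) t = Mk k (w n) (iterM k w n t)"

end

theory Submission
  imports Defs
begin

definition S3 :: "triple \<Rightarrow> real" where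
  "S3 P = comp 1 P + comp 2 P + comp 3 P"

definition shift :: "real \<Rightarrow> triple \<Rightarrow> triple" where
  "shift k P = (case P of (a,b,c) \<Rightarrow> (a+k,b+k,c+k))"

lemma comp_Mk:
  assumes "i \<in> {1,2,3}" "j \<in> {1,2,3}"
  shows "comp j (Mk k i P) = (if j = i then k + S3 P - comp j P else comp j P)"
  using assms by (cases P) (auto simp: S3_def)

lemma comp_shift: "comp j (shift k P) = comp j P + k"
  by (cases P) (auto simp: shift_def)

lemma Mk_shift: "Mk 0 i (shift k P) = shift k (Mk k i P)"
  by (cases P) (auto simp: shift_def)

lemma iterM_shift: "iterM 0 w n (shift k P) = shift k (iterM k w n P)"
  by (induction n) (auto simp: Mk_shift)

lemma mediant:
  fixes a b c e :: real
  assumes "c > 0" "e > 0"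
  shows "min (a/c) (b/e) \<le> (a+b)/(c+e) \<and> (a+b)/(c+e) \<le> max (a/c) (b/e)"
proof (cases "a/c \<le> b/e")
  case True
  then have "a*e \<le> b*c" using assms by (simp add: field_simps)
  then have "a/c \<le> (a+b)/(c+e)" "(a+b)/(c+e) \<le> b/e" using assms by (simp_all add: field_simps)
  then show ?thesis using True by simp
next
  case False
  then have "a*e \<ge> b*c" using assms by (simp add: field_simps)
  then have "a/c \<ge> (a+b)/(c+e)" "(a+b)/(c+e) \<ge> b/e" using assms by (simp_all add: field_simps)
  then show ?thesis using False by simp
qed

lemma det_gen:
  fixes a b :: "nat \<Rightarrow> real"
  assumes "p \<in> {1,2,3}" "2 * a p = a 1 + a 2 + a 3" "2 * b p = b 1 + b 2 + b 3"
    "j \<in> {1,2,3}" "l \<in> {1,2,3}" "j \<noteq> l"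
  shows "\<bar>a j * b l - a l * b j\<bar> = \<bar>a 1 * b 2 - a 2 * b 1\<bar>"
proof -
  have e: "\<bar>a 1 * b 2 - a 2 * b 1\<bar> = \<bar>a 2 * b 3 - a 3 * b 2\<bar> \<and>
           \<bar>a 1 * b 2 - a 2 * b 1\<bar> = \<bar>a 1 * b 3 - a 3 * b 1\<bar>"
  proof -
    consider "p = 1" | "p = 2" | "p = 3" using assms(1) by auto
    then show ?thesis
    proof cases
      case 1
      then have "a 1 = a 2 + a 3" "b 1 = b 2 + b 3" using assms by auto
      then show ?thesis by (simp add: algebra_simps abs_minus_commute)
    next
      case 2
      then have "a 2 = a 1 + a 3" "b 2 = b 1 + b 3" using assms by auto
      then show ?thesis by (simp add: algebra_simps abs_minus_commute)
    next
      case 3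
      then have "a 3 = a 1 + a 2" "b 3 = b 1 + b 2" using assms by auto
      then show ?thesis by (simp add: algebra_simps abs_minus_commute)
    qed
  qed
  have s: "\<bar>a j * b l - a l * b j\<bar> = \<bar>a l * b j - a j * b l\<bar>" by (simp add: abs_minus_commute)
  show ?thesis using assms(4-6) e s by auto
qed

locale euc =
  fixes w :: "nat \<Rightarrow> nat" and P0 Q0 :: triple and c0 :: real
  assumes red: "reduced_seq w" and c0: "c0 > 0"
    and P0: "\<forall>j\<in>{1,2,3}. comp j P0 \<ge> c0" and Q0: "\<forall>j\<in>{1,2,3}. comp j Q0 \<ge> c0"
begin

definition N where "N n j = comp j (iterM 0 w n P0)"
definition d where "d n j = comp j (iterM 0 w n Q0)"
definition r where "r n j = N n j / d n j"
definition Dt where "Dt n j l = N n j * d n l - N n l * d n j"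

lemma w_in: "w n \<in> {1,2,3}" and w_neq: "w n \<noteq> w (Suc n)"
  using red by (auto simp: reduced_seq_def)

lemma N_Suc: "j \<in> {1,2,3} \<Longrightarrow>
  N (Suc n) j = (if j = w n then N n 1 + N n 2 + N n 3 - N n j else N n j)"
  using w_in[of n] by (simp add: N_def comp_Mk S3_def)

lemma d_Suc: "j \<in> {1,2,3} \<Longrightarrow>
  d (Suc n) j = (if j = w n then d n 1 + d n 2 + d n 3 - d n j else d n j)"
  using w_in[of n] by (simp add: d_def comp_Mk S3_def)

lemma N_ge: "j \<in> {1,2,3} \<Longrightarrow> N n j \<ge> c0"
proof (induction n arbitrary: j)
  case 0 then show ?case using P0 by (auto simp: N_def)
next
  case (Suc n)
  have "N n 1 \<ge> c0" "N n 2 \<ge> c0" "N n 3 \<ge> c0" using Suc.IH by auto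
  then show ?case using Suc.prems c0 by (auto simp: N_Suc)
qed

lemma d_ge: "j \<in> {1,2,3} \<Longrightarrow> d n j \<ge> c0"
proof (induction n arbitrary: j)
  case 0 then show ?case using Q0 by (auto simp: d_def)
next
  case (Suc n)
  have "d n 1 \<ge> c0" "d n 2 \<ge> c0" "d n 3 \<ge> c0" using Suc.IH by auto
  then show ?case using Suc.prems c0 by (auto simp: d_Suc)
qed

lemma d_pos: "j \<in> {1,2,3} \<Longrightarrow> d n j > 0"
  using d_ge[of j n] c0 by linarith

lemma sumrel_N: "2 * N (Suc n) (w n) = N (Suc n) 1 + N (Suc n) 2 + N (Suc n) 3"
proof -
  consider "w n = 1" | "w n = 2" | "w n = 3" using w_in[of n] by auto
  then show ?thesis by cases (simp_all add: N_Suc)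
qed

lemma sumrel_d: "2 * d (Suc n) (w n) = d (Suc n) 1 + d (Suc n) 2 + d (Suc n) 3"
proof -
  consider "w n = 1" | "w n = 2" | "w n = 3" using w_in[of n] by auto
  then show ?thesis by cases (simp_all add: d_Suc)
qed

lemma Dt_all: "j \<in> {1,2,3} \<Longrightarrow> l \<in> {1,2,3} \<Longrightarrow> j \<noteq> l \<Longrightarrow>
   \<bar>Dt (Suc n) j l\<bar> = \<bar>Dt (Suc n) 1 2\<bar>"
  unfolding Dt_def
  by (rule det_gen[where p = "w n", OF w_in sumrel_N sumrel_d])

lemma Dt_step: "\<bar>Dt (Suc (Suc n)) 1 2\<bar> = \<bar>Dt (Suc n) 1 2\<bar>"
proof -
  let ?i = "w (Suc n)"
  obtain j l where jl: "j \<in> {1,2,3}" "l \<in> {1,2,3}" "j \<noteq> l" "j \<noteq> ?i" "l \<noteq> ?i"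
  proof -
    consider "?i = 1" | "?i = 2" | "?i = 3" using w_in by auto
    then show ?thesis
    proof cases
      case 1 then show ?thesis using that[of 2 3] by auto
    next
      case 2 then show ?thesis using that[of 1 3] by auto
    next
      case 3 then show ?thesis using that[of 1 2] by auto
    qed
  qed
  have "Dt (Suc (Suc n)) j l = Dt (Suc n) j l"
    using jl by (simp add: Dt_def N_Suc[of _ "Suc n"] d_Suc[of _ "Suc n"])
  then show ?thesis using Dt_all[OF jl(1-3), of n] Dt_all[OF jl(1-3), of "Suc n"] by simp
qed

definition "D = \<bar>Dt 1 1 2\<bar>"

lemma Dt_const: "n \<ge> 1 \<Longrightarrow> \<bar>Dt n 1 2\<bar> = D"
proof (induction n rule: dec_induct)
  case base then show ?case by (simp add: D_def)
next
  case (step m)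
  then obtain m' where "m = Suc m'" by (cases m) auto
  then show ?case using step Dt_step[of m'] by simp
qed

lemma D_nonneg: "D \<ge> 0" by (simp add: D_def)

lemma r_diff: assumes "n \<ge> 1" "j \<in> {1,2,3}" "l \<in> {1,2,3}"
  shows "\<bar>r n j - r n l\<bar> \<le> D / (d n j * d n l)"
proof (cases "j = l")
  case True then show ?thesis using D_nonneg d_pos assms by simp
next
  case False
  obtain m where m: "n = Suc m" using assms by (cases n) auto
  have "r n j - r n l = Dt n j l / (d n j * d n l)"
    using d_pos[of j n] d_pos[of l n] assms by (simp add: r_def Dt_def field_simps)
  moreover have "\<bar>Dt n j l\<bar> = D" using Dt_all[of j l m] assms False m Dt_const by simp
  ultimately show ?thesis using d_pos[of j n] d_pos[of l n] assms by (simp add: abs_mult)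
qed


lemma d_step: assumes "n \<ge> 1" "j \<in> {1,2,3}"
  shows "d n j \<le> d (Suc n) j" and "w n = j \<Longrightarrow> d (Suc n) j \<ge> d n j + c0"
proof -
  obtain m where m: "n = Suc m" using assms by (cases n) auto
  have sr: "2 * d n (w m) = d n 1 + d n 2 + d n 3" using sumrel_d[of m] m by simp
  have ne: "w n \<noteq> w m" using w_neq[of m] m by simp
  have g: "d n 1 \<ge> c0" "d n 2 \<ge> c0" "d n 3 \<ge> c0" using d_ge by auto
  have key: "w n = j \<Longrightarrow> d (Suc n) j \<ge> d n j + c0"
  proof -
    assume j: "w n = j"
    have e: "d (Suc n) j = d n 1 + d n 2 + d n 3 - d n j" using d_Suc[OF assms(2), of n] j by simp
    consider "w m = 1" | "w m = 2" | "w m = 3" using w_in[of m] by auto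
    then show ?thesis
    proof cases
      case 1 then show ?thesis using e sr ne j assms(2) g c0 by auto
    next
      case 2 then show ?thesis using e sr ne j assms(2) g c0 by auto
    next
      case 3 then show ?thesis using e sr ne j assms(2) g c0 by auto
    qed
  qed
  show "w n = j \<Longrightarrow> d (Suc n) j \<ge> d n j + c0" by (rule key)
  show "d n j \<le> d (Suc n) j"
  proof (cases "w n = j")
    case True then show ?thesis using key c0 by fastforce
  next
    case False then show ?thesis using d_Suc[OF assms(2), of n] by simp
  qed
qed

lemma d_mono: assumes "n \<ge> 1" "m \<ge> n" "j \<in> {1,2,3}" shows "d n j \<le> d m j"
  using assms(2)
proof (induction m rule: dec_induct)
  case base then show ?case by simp
next
  case (step m) then show ?case using d_step(1)[of m j] assms by linarith
qed

lemma d_inf: assumes j: "j \<in> {1,2,3}" and inf: "infinite {n. w n = j}"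
  shows "filterlim (\<lambda>n. d n j) at_top sequentially"
proof -
  have ex: "\<exists>n\<ge>1. d n j \<ge> d 1 j + real K * c0" for K
  proof (induction K)
    case 0 then show ?case by auto
  next
    case (Suc K)
    then obtain n where n: "n \<ge> 1" "d n j \<ge> d 1 j + real K * c0" by auto
    have "\<not> (\<forall>m\<in>{n. w n = j}. m \<le> n)" using inf finite_nat_set_iff_bounded_le by blast
    then obtain m where m: "m \<ge> n" "w m = j" by (auto simp: not_le intro: less_imp_le)
    have "d (Suc m) j \<ge> d m j + c0" using d_step(2)[of m j] m n j by auto
    moreover have "d m j \<ge> d n j" using d_mono[of n m j] m n j by auto
    ultimately have "d (Suc m) j \<ge> d 1 j + real (Suc K) * c0" using n by (simp add: algebra_simps)
    then show ?case by (intro exI[of _ "Suc m"]) auto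
  qed
  show ?thesis unfolding filterlim_at_top
  proof
    fix Z :: real
    obtain K :: nat where K: "real K * c0 \<ge> Z - d 1 j"
    proof -
      obtain K :: nat where "(Z - d 1 j) / c0 \<le> real K" using real_arch_simple by blast
      then have "Z - d 1 j \<le> real K * c0" using c0 by (simp add: field_simps)
      then show ?thesis using that by blast
    qed
    obtain n where n: "n \<ge> 1" "d n j \<ge> d 1 j + real K * c0" using ex by blast
    show "eventually (\<lambda>m. Z \<le> d m j) sequentially"
      unfolding eventually_sequentially
    proof (intro exI allI impI)
      fix m assume "m \<ge> n"
      then have "d n j \<le> d m j" using d_mono n j by auto
      then show "Z \<le> d m j" using n K by linarith
    qed
  qed
qed

lemma r_zero: assumes "j \<in> {1,2,3}" "l \<in> {1,2,3}"
  and "filterlim (\<lambda>n. d n j) at_top sequentially"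
  and "filterlim (\<lambda>n. d n l) at_top sequentially"
  shows "(\<lambda>n. r n j - r n l) \<longlonglongrightarrow> 0"
proof -
  have "filterlim (\<lambda>n. d n j * d n l) at_top sequentially"
    using filterlim_at_top_mult_at_top[OF assms(3,4)] .
  then have "(\<lambda>n. inverse (d n j * d n l)) \<longlonglongrightarrow> 0" by (rule tendsto_inverse_0_at_top)
  then have g: "(\<lambda>n. D / (d n j * d n l)) \<longlonglongrightarrow> 0"
    using tendsto_mult_right_zero[of _ sequentially D] by (simp add: divide_inverse)
  then have g': "(\<lambda>n. - (D / (d n j * d n l))) \<longlonglongrightarrow> 0" using tendsto_minus by fastforce
  have ev: "eventually (\<lambda>n. \<bar>r n j - r n l\<bar> \<le> D / (d n j * d n l)) sequentially"
    unfolding eventually_sequentially using r_diff assms(1,2) by blast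
  show ?thesis
    by (rule tendsto_sandwich[OF _ _ g' g]) (use ev in \<open>auto elim: eventually_mono\<close>)
qed


definition "mn n = min (r n 1) (min (r n 2) (r n 3))"
definition "mx n = max (r n 1) (max (r n 2) (r n 3))"

lemma r_Suc: "j \<in> {1,2,3} \<Longrightarrow> r (Suc n) j = (if j = w n then
   (N n 1 + N n 2 + N n 3 - N n j) / (d n 1 + d n 2 + d n 3 - d n j) else r n j)"
  by (simp add: r_def N_Suc d_Suc)

lemma mn_mx_step: "mn n \<le> mn (Suc n) \<and> mx (Suc n) \<le> mx n"
proof -
  have p: "d n 1 > 0" "d n 2 > 0" "d n 3 > 0" using d_pos by auto
  have r: "r n 1 = N n 1 / d n 1" "r n 2 = N n 2 / d n 2" "r n 3 = N n 3 / d n 3" by (simp_all add: r_def)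
  consider "w n = 1" | "w n = 2" | "w n = 3" using w_in[of n] by auto
  then show ?thesis
  proof cases
    case 1
    have "r (Suc n) 1 = (N n 2 + N n 3) / (d n 2 + d n 3)" using 1 by (simp add: r_Suc)
    moreover have "r (Suc n) 2 = r n 2" "r (Suc n) 3 = r n 3" using 1 by (simp_all add: r_Suc)
    moreover note mediant[OF p(2) p(3), of "N n 2" "N n 3"]
    ultimately show ?thesis unfolding mn_def mx_def r by linarith
  next
    case 2
    have "r (Suc n) 2 = (N n 1 + N n 3) / (d n 1 + d n 3)" using 2 by (simp add: r_Suc)
    moreover have "r (Suc n) 1 = r n 1" "r (Suc n) 3 = r n 3" using 2 by (simp_all add: r_Suc)
    moreover note mediant[OF p(1) p(3), of "N n 1" "N n 3"]
    ultimately show ?thesis unfolding mn_def mx_def r by linarith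
  next
    case 3
    have "r (Suc n) 3 = (N n 1 + N n 2) / (d n 1 + d n 2)" using 3 by (simp add: r_Suc)
    moreover have "r (Suc n) 1 = r n 1" "r (Suc n) 2 = r n 2" using 3 by (simp_all add: r_Suc)
    moreover note mediant[OF p(1) p(2), of "N n 1" "N n 2"]
    ultimately show ?thesis unfolding mn_def mx_def r by linarith
  qed
qed

lemma case1: assumes inf: "\<forall>j\<in>{1,2,3::nat}. infinite {n. w n = j}"
  shows "\<exists>q. \<forall>j\<in>{1,2,3::nat}. (\<lambda>n. r n j) \<longlonglongrightarrow> q"
proof -
  have dinf: "filterlim (\<lambda>n. d n j) at_top sequentially" if "j \<in> {1,2,3}" for j
    using d_inf that inf by blast
  have inc: "incseq mn" using mn_mx_step by (simp add: incseq_SucI)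
  have dec: "decseq mx" using mn_mx_step by (simp add: decseq_SucI)
  have "mn i \<le> mx 0" for i
  proof -
    have "mn i \<le> mx i" unfolding mn_def mx_def by linarith
    also have "mx i \<le> mx 0" using dec by (simp add: decseq_def)
    finally show ?thesis .
  qed
  then obtain q where q: "mn \<longlonglongrightarrow> q" using incseq_convergent[OF inc] by blast
  have "(\<lambda>n. r n j) \<longlonglongrightarrow> q" if j: "j \<in> {1,2,3}" for j
  proof -
    have z: "(\<lambda>n. r n j - r n l) \<longlonglongrightarrow> 0" if "l \<in> {1,2,3}" for l
      using r_zero[OF j that dinf[OF j] dinf[OF that]] .
    have zz: "(\<lambda>n. \<bar>r n j - r n 1\<bar> + \<bar>r n j - r n 2\<bar> + \<bar>r n j - r n 3\<bar>) \<longlonglongrightarrow> 0 + 0 + 0"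
      by (intro tendsto_add tendsto_rabs_zero z) auto
    have b: "0 \<le> r n j - mn n \<and> r n j - mn n \<le> \<bar>r n j - r n 1\<bar> + \<bar>r n j - r n 2\<bar> + \<bar>r n j - r n 3\<bar>" for n
      using j unfolding mn_def by auto
    have "(\<lambda>n. r n j - mn n) \<longlonglongrightarrow> 0"
      by (rule tendsto_sandwich[OF _ _ tendsto_const zz[simplified]]) (use b in auto)
    then have "(\<lambda>n. mn n + (r n j - mn n)) \<longlonglongrightarrow> q + 0" using q by (intro tendsto_add)
    then show ?thesis by simp
  qed
  then show ?thesis by blast
qed

lemma case2: assumes i: "i \<in> {1,2,3::nat}" and fin: "finite {n. w n = i}"
  shows "\<exists>q. \<forall>j\<in>{1,2,3::nat} - {i}. (\<lambda>n. r n j) \<longlonglongrightarrow> q \<and>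
     filterlim (\<lambda>n. d n j) at_top sequentially"
proof -
  obtain M0 where M0: "\<forall>n\<in>{n. w n = i}. n \<le> M0"
    using fin unfolding finite_nat_set_iff_bounded_le by blast
  define N0 where "N0 = Suc M0"
  have N0: "\<forall>n\<ge>N0. w n \<noteq> i"
  proof (intro allI impI)
    fix n assume "n \<ge> N0"
    then show "w n \<noteq> i" using M0 unfolding N0_def by force
  qed
  have const: "r n i = r N0 i" if "n \<ge> N0" for n
    using that
  proof (induction n rule: dec_induct)
    case base then show ?case by simp
  next
    case (step m)
    have "w m \<noteq> i" using N0 step by auto
    then show ?case using step i by (simp add: r_Suc)
  qed
  have infj: "infinite {n. w n = j}" if j: "j \<in> {1,2,3}" "j \<noteq> i" for j
  proof
    assume "finite {n. w n = j}"
    then obtain M1 where M1: "\<forall>n\<in>{n. w n = j}. n \<le> M1"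
      unfolding finite_nat_set_iff_bounded_le by blast
    define N1 where "N1 = Suc M1"
    have N1: "\<forall>n\<ge>N1. w n \<noteq> j"
    proof (intro allI impI)
      fix n assume "n \<ge> N1"
      then show "w n \<noteq> j" using M1 unfolding N1_def by force
    qed
    let ?n = "max N0 N1"
    have "w ?n \<noteq> i" "w ?n \<noteq> j" "w (Suc ?n) \<noteq> i" "w (Suc ?n) \<noteq> j" using N0 N1 by auto
    moreover have "w ?n \<in> {1,2,3}" "w (Suc ?n) \<in> {1,2,3}" using w_in by auto
    moreover have "w ?n \<noteq> w (Suc ?n)" using w_neq by auto
    ultimately show False using i j by fastforce
  qed
  have "(\<lambda>n. r n j) \<longlonglongrightarrow> r N0 i \<and> filterlim (\<lambda>n. d n j) at_top sequentially"
    if j: "j \<in> {1,2,3}" "j \<noteq> i" for j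
  proof
    show dj: "filterlim (\<lambda>n. d n j) at_top sequentially" using d_inf[OF j(1) infj[OF j]] .
    have "(\<lambda>n. inverse (d n j)) \<longlonglongrightarrow> 0" using tendsto_inverse_0_at_top[OF dj] .
    then have g: "(\<lambda>n. (D / c0) * inverse (d n j)) \<longlonglongrightarrow> 0"
      using tendsto_mult_right_zero by blast
    then have g': "(\<lambda>n. - ((D / c0) * inverse (d n j))) \<longlonglongrightarrow> 0" using tendsto_minus by fastforce
    have b: "\<bar>r n j - r n i\<bar> \<le> (D / c0) * inverse (d n j)" if "n \<ge> 1" for n
    proof -
      have "\<bar>r n j - r n i\<bar> \<le> D / (d n j * d n i)" using r_diff[OF that j(1) i] .
      also have "\<dots> \<le> D / (d n j * c0)"
        using d_pos[OF j(1), of n] d_ge[OF i, of n] c0 D_nonneg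
        by (intro divide_left_mono mult_left_mono) auto
      finally show ?thesis by (simp add: field_simps)
    qed
    have diff: "(\<lambda>n. r n j - r n i) \<longlonglongrightarrow> 0"
    proof (rule tendsto_sandwich[OF _ _ g' g])
      show "eventually (\<lambda>n. - ((D / c0) * inverse (d n j)) \<le> r n j - r n i) sequentially"
        unfolding eventually_sequentially
      proof (intro exI[of _ 1] allI impI)
        fix n :: nat assume "n \<ge> 1"
        then have "\<bar>r n j - r n i\<bar> \<le> (D / c0) * inverse (d n j)" using b by blast
        then show "- ((D / c0) * inverse (d n j)) \<le> r n j - r n i" unfolding abs_le_iff by linarith
      qed
      show "eventually (\<lambda>n. r n j - r n i \<le> (D / c0) * inverse (d n j)) sequentially"
        unfolding eventually_sequentially
      proof (intro exI[of _ 1] allI impI)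
        fix n :: nat assume "n \<ge> 1"
        then have "\<bar>r n j - r n i\<bar> \<le> (D / c0) * inverse (d n j)" using b by blast
        then show "r n j - r n i \<le> (D / c0) * inverse (d n j)" unfolding abs_le_iff by linarith
      qed
    qed
    have ev: "eventually (\<lambda>n. r n i = r N0 i) sequentially"
      unfolding eventually_sequentially using const by blast
    have A: "(\<lambda>n. r n i) \<longlonglongrightarrow> r N0 i" using tendsto_eventually[OF ev] .
    have "(\<lambda>n. r n i + (r n j - r n i)) \<longlonglongrightarrow> r N0 i + 0"
      using tendsto_add[OF A diff] .
    then show "(\<lambda>n. r n j) \<longlonglongrightarrow> r N0 i" by simp
  qed
  then show ?thesis by blast
qed


lemma ratio_conv:
  assumes "(\<lambda>n. r n j) \<longlonglongrightarrow> q" "filterlim (\<lambda>n. d n j) at_top sequentially"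
  shows "(\<lambda>n. (N n j - k) / d n j) \<longlonglongrightarrow> q"
proof -
  have "(\<lambda>n. k * inverse (d n j)) \<longlonglongrightarrow> 0"
    using tendsto_mult_right_zero[OF tendsto_inverse_0_at_top[OF assms(2)]] .
  from tendsto_diff[OF assms(1) this] have "(\<lambda>n. r n j - k * inverse (d n j)) \<longlonglongrightarrow> q" by simp
  moreover have "r n j - k * inverse (d n j) = (N n j - k) / d n j" for n
    unfolding r_def by (simp add: divide_inverse left_diff_distrib)
  ultimately show ?thesis by simp
qed

end

theorem theorem5p10:
  fixes k :: real and T t :: triple and w :: "nat \<Rightarrow> nat"
  assumes "k \<ge> 0"
    and "k_initial k T"
    and "k_initial 0 t"
    and "reduced_seq w"
  shows "((\<forall>i\<in>{1,2,3::nat}. infinite {n. w n = i}) \<longrightarrow>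
            (\<exists>q::real. \<forall>j\<in>{1,2,3::nat}.
               (\<lambda>n. comp j (iterM k w n T) / comp j (iterM 0 w n t)) \<longlonglongrightarrow> q))
       \<and> (\<forall>i\<in>{1,2,3::nat}. finite {n. w n = i} \<longrightarrow>
            (\<exists>q::real. \<forall>j\<in>{1,2,3::nat} - {i}.
               (\<lambda>n. comp j (iterM k w n T) / comp j (iterM 0 w n t)) \<longlonglongrightarrow> q))"
proof -
  have pT: "comp 1 T > 0" "comp 2 T > 0" "comp 3 T > 0"
    using assms(2) by (auto simp: k_initial_def pos_triple_def)
  have pt: "comp 1 t > 0" "comp 2 t > 0" "comp 3 t > 0"
    using assms(3) by (auto simp: k_initial_def pos_triple_def)
  define c0 where "c0 = min (min (comp 1 T) (min (comp 2 T) (comp 3 T)))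
                            (min (comp 1 t) (min (comp 2 t) (comp 3 t)))"
  have c0: "c0 > 0" using pT pt by (simp add: c0_def)
  have P0: "\<forall>j\<in>{1,2,3}. comp j (shift k T) \<ge> c0"
  proof
    fix j :: nat assume "j \<in> {1,2,3}"
    then have "comp j T \<ge> c0" unfolding c0_def by auto
    then show "comp j (shift k T) \<ge> c0" using assms(1) by (simp add: comp_shift)
  qed
  have Q0: "\<forall>j\<in>{1,2,3}. comp j t \<ge> c0"
    unfolding c0_def by auto
  interpret E: euc w "shift k T" t c0
    by unfold_locales (fact assms(4) c0 P0 Q0)+
  have eq: "comp j (iterM k w n T) / comp j (iterM 0 w n t) = (E.N n j - k) / E.d n j" for j n
    by (simp add: E.N_def E.d_def iterM_shift comp_shift)
  show ?thesis
  proof (intro conjI impI ballI)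
    assume inf: "\<forall>i\<in>{1,2,3::nat}. infinite {n. w n = i}"
    obtain q where q: "\<forall>j\<in>{1,2,3::nat}. (\<lambda>n. E.r n j) \<longlonglongrightarrow> q" using E.case1[OF inf] by blast
    have "(\<lambda>n. comp j (iterM k w n T) / comp j (iterM 0 w n t)) \<longlonglongrightarrow> q" if j: "j \<in> {1,2,3}" for j
      unfolding eq by (rule E.ratio_conv) (use q j E.d_inf inf in auto)
    then show "\<exists>q::real. \<forall>j\<in>{1,2,3::nat}.
               (\<lambda>n. comp j (iterM k w n T) / comp j (iterM 0 w n t)) \<longlonglongrightarrow> q" by blast
  next
    fix i :: nat assume i: "i \<in> {1,2,3}" and fin: "finite {n. w n = i}"
    obtain q where q: "\<forall>j\<in>{1,2,3::nat} - {i}. (\<lambda>n. E.r n j) \<longlonglongrightarrow> q \<and>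
       filterlim (\<lambda>n. E.d n j) at_top sequentially" using E.case2[OF i fin] by blast
    have "(\<lambda>n. comp j (iterM k w n T) / comp j (iterM 0 w n t)) \<longlonglongrightarrow> q" if j: "j \<in> {1,2,3} - {i}" for j
      unfolding eq by (rule E.ratio_conv) (use q j in auto)
    then show "\<exists>q::real. \<forall>j\<in>{1,2,3::nat} - {i}.
               (\<lambda>n. comp j (iterM k w n T) / comp j (iterM 0 w n t)) \<longlonglongrightarrow> q" by blast
  qed
qed

end
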